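(* Let $A$ and $B$ be self-adjoint operators on the same complex Hilbert space, with $B$ bounded, non-negative and $B\neq 0$, and suppose that $0\in\rho(A)$ and $BA^{-1}B=0$ (equivalently, $0\in\rho(A+tB)$ for all $t\in\mathbb{R}$). Then $A^{-1}BA^{-1} \neq 0$ and $$\frac{1}{|t|\,\|A^{-1}BA^{-1}\|+\|A^{-1}\|} \le \operatorname{dist}\bigl(0,\sigma(A+tB)\bigr) \le \frac{1}{|t|\,\|A^{-1}BA^{-1}\|-\|A^{-1}\|}$$ for all $t \in \mathbb{R}$ with $|t| > \|A^{-1}\| / \|A^{-1}BA^{-1}\|$.
   Context: $\sigma(T)$ and $\rho(T)$ denote the spectrum and resolvent set of an operator $T$. $A$ may be unbounded. *)

theory Defs
  imports "HOL-Analysis.Analysis"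
begin

class chilbert = real_normed_vector + complete_space +
  fixes scaleC :: "complex \<Rightarrow> 'a \<Rightarrow> 'a" (infixr \<open>*\<^sub>C\<close> 75)
    and cinner :: "'a \<Rightarrow> 'a \<Rightarrow> complex"
  assumes scaleC_add_right: "a *\<^sub>C (x + y) = a *\<^sub>C x + a *\<^sub>C y"
    and scaleC_add_left: "(a + b) *\<^sub>C x = a *\<^sub>C x + b *\<^sub>C x"
    and scaleC_scaleC: "a *\<^sub>C (b *\<^sub>C x) = (a * b) *\<^sub>C x"
    and scaleC_one: "1 *\<^sub>C x = x"
    and scaleR_scaleC: "r *\<^sub>R x = complex_of_real r *\<^sub>C x"
    and cinner_commute: "cinner x y = cnj (cinner y x)"
    and cinner_add_right: "cinner x (y + z) = cinner x y + cinner x z"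
    and cinner_scaleC_right: "cinner x (a *\<^sub>C y) = a * cinner x y"
    and cinner_ge_zero: "0 \<le> Re (cinner x x)"
    and cinner_eq_zero_iff: "cinner x x = 0 \<longleftrightarrow> x = 0"
    and norm_eq_sqrt_cinner: "norm x = sqrt (Re (cinner x x))"

text \<open>A (possibly unbounded) operator is a pair of a domain D and a map T, meaningful on D.\<close>

definition clinear_on :: "'a::chilbert set \<Rightarrow> ('a \<Rightarrow> 'a) \<Rightarrow> bool" where
  "clinear_on D T \<longleftrightarrow>
     0 \<in> D \<and> (\<forall>x\<in>D. \<forall>y\<in>D. x + y \<in> D) \<and> (\<forall>c. \<forall>x\<in>D. c *\<^sub>C x \<in> D) \<and>
     (\<forall>x\<in>D. \<forall>y\<in>D. T (x + y) = T x + T y) \<and> (\<forall>c. \<forall>x\<in>D. T (c *\<^sub>C x) = c *\<^sub>C T x)"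

definition bounded_clinear_op :: "('a::chilbert \<Rightarrow> 'a) \<Rightarrow> bool" where
  "bounded_clinear_op T \<longleftrightarrow> clinear_on UNIV T \<and> (\<exists>K. \<forall>x. norm (T x) \<le> norm x * K)"

text \<open>Self-adjointness of a densely defined operator: \<open>T\<^sup>* = T\<close> including domains,
  where \<open>y \<in> dom T\<^sup>*\<close> with \<open>T\<^sup>* y = z\<close> iff \<open>\<langle>T x, y\<rangle> = \<langle>x, z\<rangle>\<close> for all \<open>x \<in> D\<close>.\<close>

definition self_adjoint_op :: "'a::chilbert set \<Rightarrow> ('a \<Rightarrow> 'a) \<Rightarrow> bool" where
  "self_adjoint_op D T \<longleftrightarrow> clinear_on D T \<and> closure D = UNIV \<and>
     (\<forall>y z. (\<forall>x\<in>D. cinner (T x) y = cinner x z) \<longleftrightarrow> (y \<in> D \<and> z = T y))"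

definition resolvent_set :: "'a::chilbert set \<Rightarrow> ('a \<Rightarrow> 'a) \<Rightarrow> complex set" where
  "resolvent_set D T = {z. bij_betw (\<lambda>x. T x - z *\<^sub>C x) D UNIV \<and>
      bounded_clinear_op (inv_into D (\<lambda>x. T x - z *\<^sub>C x))}"

definition spectrum_op :: "'a::chilbert set \<Rightarrow> ('a \<Rightarrow> 'a) \<Rightarrow> complex set" where
  "spectrum_op D T = - resolvent_set D T"

end

theory Submission
  imports Defs
begin


lemma scaleC_zero_left[simp]: "(0::complex) *\<^sub>C (x::'a::chilbert) = 0"
proof -
  have "(0::complex) *\<^sub>C x = (0 + 0) *\<^sub>C x" by simp
  also have "\<dots> = 0 *\<^sub>C x + 0 *\<^sub>C x" by (rule scaleC_add_left)
  finally show ?thesis by simp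
qed

lemma scaleC_zero_right[simp]: "c *\<^sub>C (0::'a::chilbert) = 0"
proof -
  have "c *\<^sub>C (0::'a) = c *\<^sub>C (0 + 0)" by simp
  also have "\<dots> = c *\<^sub>C 0 + c *\<^sub>C 0" by (rule scaleC_add_right)
  finally show ?thesis by simp
qed

lemma scaleC_minus_right: "c *\<^sub>C (- x::'a::chilbert) = - (c *\<^sub>C x)"
proof -
  have "c *\<^sub>C (- x) + c *\<^sub>C x = c *\<^sub>C (-x + x)" by (simp only: scaleC_add_right)
  then show ?thesis by (simp add: eq_neg_iff_add_eq_0)
qed

lemma scaleC_diff_right: "c *\<^sub>C (x - y::'a::chilbert) = c *\<^sub>C x - c *\<^sub>C y"
  by (simp only: diff_conv_add_uminus scaleC_add_right scaleC_minus_right)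

lemma scaleC_minus1: "(-1) *\<^sub>C (x::'a::chilbert) = - x"
proof -
  have "(-1) *\<^sub>C x + x = ((-1) + 1) *\<^sub>C x" by (simp only: scaleC_add_left scaleC_one)
  then show ?thesis by (simp add: eq_neg_iff_add_eq_0)
qed

lemma scaleC_diff_left: "(a - b) *\<^sub>C (x::'a::chilbert) = a *\<^sub>C x - b *\<^sub>C x"
proof -
  have "(a - b) *\<^sub>C x + b *\<^sub>C x = a *\<^sub>C x" by (simp add: scaleC_add_left[symmetric])
  then show ?thesis by (simp add: eq_diff_eq)
qed

lemma scaleC_comm: "a *\<^sub>C (b *\<^sub>C (x::'a::chilbert)) = b *\<^sub>C (a *\<^sub>C x)"
  by (simp add: scaleC_scaleC mult.commute)

lemma scaleR_as_C: "r *\<^sub>R (x::'a::chilbert) = complex_of_real r *\<^sub>C x"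
  by (rule scaleR_scaleC)

lemma cinner_add_left: "cinner (x + y) (z::'a::chilbert) = cinner x z + cinner y z"
  by (metis cinner_add_right cinner_commute complex_cnj_add)

lemma cinner_scaleC_left: "cinner (a *\<^sub>C x) (y::'a::chilbert) = cnj a * cinner x y"
  by (metis cinner_commute cinner_scaleC_right complex_cnj_mult)

lemma cinner_zero_left[simp]: "cinner 0 (y::'a::chilbert) = 0"
  by (metis add_cancel_right_right add_0 cinner_add_left)

lemma cinner_zero_right[simp]: "cinner y (0::'a::chilbert) = 0"
  by (metis add_cancel_right_right add_0 cinner_add_right)

lemma cinner_minus_left: "cinner (- x) (y::'a::chilbert) = - cinner x y"
  by (metis add.right_inverse cinner_add_left cinner_zero_left eq_neg_iff_add_eq_0)

lemma cinner_minus_right: "cinner y (- x::'a::chilbert) = - cinner y x"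
  by (metis add.right_inverse cinner_add_right cinner_zero_right eq_neg_iff_add_eq_0)

lemma cinner_diff_left: "cinner (x - y) (z::'a::chilbert) = cinner x z - cinner y z"
  by (simp only: diff_conv_add_uminus cinner_add_left cinner_minus_left)

lemma cinner_diff_right: "cinner z (x - y::'a::chilbert) = cinner z x - cinner z y"
  by (simp only: diff_conv_add_uminus cinner_add_right cinner_minus_right)

lemma cinner_self_real: "cinner x (x::'a::chilbert) = complex_of_real ((norm x)^2)"
proof -
  have "Im (cinner x x) = 0" by (metis cinner_commute cnj.simps(2) neg_equal_zero)
  moreover have "Re (cinner x x) = (norm x)^2" using norm_eq_sqrt_cinner[of x] cinner_ge_zero[of x] by simp
  ultimately show ?thesis by (simp add: complex_eq_iff)
qed

lemma norm_scaleC: "norm (c *\<^sub>C (x::'a::chilbert)) = cmod c * norm x"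
proof -
  have "cinner (c *\<^sub>C x) (c *\<^sub>C x) = cnj c * c * cinner x x"
    by (simp add: cinner_scaleC_left cinner_scaleC_right)
  also have "cnj c * c = complex_of_real ((cmod c)^2)" by (metis complex_norm_square mult.commute)
  finally have "Re (cinner (c *\<^sub>C x) (c *\<^sub>C x)) = (cmod c)^2 * Re (cinner x x)" by simp
  then show ?thesis using norm_eq_sqrt_cinner[of x] norm_eq_sqrt_cinner[of "c *\<^sub>C x"]
    by (simp add: real_sqrt_mult)
qed

lemma norm_diff_sq: "(norm (u - v::'a::chilbert))^2 = (norm u)^2 - 2 * Re (cinner u v) + (norm v)^2"
proof -
  have "cinner (u - v) (u - v) = cinner u u - cinner u v - cinner v u + cinner v v"
    by (simp add: cinner_diff_left cinner_diff_right)
  moreover have "Re (cinner v u) = Re (cinner u v)" using cinner_commute[of v u] by simp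
  ultimately show ?thesis using cinner_self_real[of "u - v"] cinner_self_real[of u] cinner_self_real[of v]
    by (metis (no_types, lifting) Re_complex_of_real minus_complex.sel plus_complex.sel mult_2 diff_diff_eq)
qed

lemma bounded_clinear_op_bl: "bounded_clinear_op f \<Longrightarrow> bounded_linear f"
  unfolding bounded_clinear_op_def clinear_on_def
  by (metis UNIV_I bounded_linear_intro scaleR_scaleC)



lemma approx_eig:
  fixes S :: "'a::chilbert \<Rightarrow> 'a"
  assumes bl: "bounded_linear S" and sym: "\<And>x y. cinner (S x) y = cinner x (S y)"
    and pos: "0 < onorm S"
  shows "\<exists>l. \<bar>l\<bar> = onorm S \<and> (\<forall>e>0. \<exists>y. norm y = 1 \<and> norm (S y - l *\<^sub>R y) < e)"
proof -
  interpret S: bounded_linear S by (rule bl)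
  define s where "s = onorm S"
  have s0: "0 < s" using pos s_def by simp
  have Sb: "\<And>x. norm (S x) \<le> s * norm x" unfolding s_def by (rule onorm[OF bl])
  have near: "\<exists>x. norm x = 1 \<and> s - d < norm (S x)" if d: "0 < d" "d \<le> s" for d
  proof (rule ccontr)
    assume "\<not> ?thesis"
    then have H: "\<And>x. norm x = 1 \<Longrightarrow> norm (S x) \<le> s - d" by force
    have "norm (S x) \<le> (s - d) * norm x" for x
    proof (cases "x = 0")
      case True then show ?thesis by simp
    next
      case False
      define u where "u = (1 / norm x) *\<^sub>R x"
      have "norm u = 1" using False by (simp add: u_def)
      have "x = norm x *\<^sub>R u" using False by (simp add: u_def)
      then have "S x = norm x *\<^sub>R S u" by (metis S.scale)
      then have "norm (S x) = norm x * norm (S u)" by simp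
      also have "\<dots> \<le> norm x * (s - d)" using H[OF \<open>norm u = 1\<close>] by (simp add: mult_left_mono)
      finally show ?thesis by (simp add: mult.commute)
    qed
    then have "onorm S \<le> s - d" using d by (intro onorm_bound) auto
    then show False using d s_def by simp
  qed
  have sq: "(norm (S (S x) - s^2 *\<^sub>R x))^2 \<le> 2 * s ^ 4 - 2 * s ^ 2 * (norm (S x))^2" if x: "norm x = 1" for x
  proof -
    have "cinner (S (S x)) (s^2 *\<^sub>R x) = complex_of_real (s^2) * cinner (S x) (S x)"
      by (simp add: scaleR_as_C cinner_scaleC_right sym)
    then have re: "Re (cinner (S (S x)) (s^2 *\<^sub>R x)) = s^2 * (norm (S x))^2"
      by (simp add: cinner_self_real)
    have a: "norm (S (S x)) \<le> s * s" using Sb[of "S x"] Sb[of x] x s0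
    proof -
      have "s * norm (S x) \<le> s * s" using Sb[of x] x s0 by (intro mult_left_mono) auto
      then show ?thesis using Sb[of "S x"] by linarith
    qed
    have "(norm (S (S x)))^2 \<le> (s * s) ^ 2" using a by (simp add: power_mono)
    moreover have "norm (s^2 *\<^sub>R x) = s^2" using x by simp
    ultimately show ?thesis using norm_diff_sq[of "S (S x)" "s^2 *\<^sub>R x"] re
      by (simp add: power_mult_distrib x)
  qed
  have c1: "\<exists>x. norm x = 1 \<and> norm (S (S x) - s^2 *\<^sub>R x) < e" if e: "0 < e" for e
  proof -
    define d where "d = min s (e^2 / (8 * s^3))"
    have d0: "0 < d" "d \<le> s" using s0 e by (auto simp: d_def)
    have d1: "d \<le> e^2 / (8 * s^3)" by (simp add: d_def)
    obtain x where x: "norm x = 1" "s - d < norm (S x)" using near[OF d0] by blast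
    have "(s - d)^2 \<le> (norm (S x))^2" using x d0 by (intro power_mono) auto
    then have "(norm (S (S x) - s^2 *\<^sub>R x))^2 \<le> 2 * s ^ 4 - 2 * s ^ 2 * (s-d)^2"
      using sq[OF x(1)] s0 by (smt (verit) mult_left_mono zero_le_power2)
    also have "\<dots> = 2 * s^2 * (2 * s*d - d^2)" by (simp add: algebra_simps power2_eq_square power4_eq_xxxx)
    also have "\<dots> \<le> 2 * s^2 * (2 * s*d)" using s0 by (intro mult_left_mono) auto
    also have "\<dots> = 4 * s^3 * d" by (simp add: power2_eq_square power3_eq_cube)
    also have "\<dots> \<le> 4 * s^3 * (e^2 / (8 * s^3))" using d1 s0 by (intro mult_left_mono) auto
    also have "\<dots> = e^2/2" using s0 by simp
    also have "\<dots> < e^2" using e by simp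
    finally have "(norm (S (S x) - s^2 *\<^sub>R x))^2 < e^2" .
    then have "norm (S (S x) - s^2 *\<^sub>R x) < e" using e by (meson power_less_imp_less_base less_imp_le)
    then show ?thesis using x by blast
  qed
  show ?thesis
  proof (cases "\<forall>e>0. \<exists>y. norm y = 1 \<and> norm (S y - s *\<^sub>R y) < e")
    case True then show ?thesis using s0 s_def by (intro exI[of _ s]) auto
  next
    case False
    then obtain c where c: "0 < c" "\<And>y. norm y = 1 \<Longrightarrow> c \<le> norm (S y - s *\<^sub>R y)"
      by (meson not_le)
    have cb: "c * norm y \<le> norm (S y - s *\<^sub>R y)" for y
    proof (cases "y = 0")
      case True then show ?thesis by simp
    next
      case False
      define u where "u = (1 / norm y) *\<^sub>R y"
      have u1: "norm u = 1" using False by (simp add: u_def)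
      have "y = norm y *\<^sub>R u" using False by (simp add: u_def)
      then have "S y - s *\<^sub>R y = norm y *\<^sub>R (S u - s *\<^sub>R u)"
        by (metis S.scale scaleR_right_diff_distrib scaleR_left_commute)
      then have "norm (S y - s *\<^sub>R y) = norm y * norm (S u - s *\<^sub>R u)" by simp
      moreover have "c * norm y \<le> norm y * norm (S u - s *\<^sub>R u)" using c(2)[OF u1]
        by (metis mult.commute mult_left_mono norm_ge_zero)
      ultimately show ?thesis by simp
    qed
    show ?thesis
    proof (intro exI[of _ "-s"] conjI allI impI)
      show "\<bar>- s\<bar> = onorm S" using s0 s_def by simp
      fix e :: real assume e: "0 < e"
      obtain x where x: "norm x = 1" "norm (S (S x) - s^2 *\<^sub>R x) < c * e"
        using c1[of "c * e"] e c by auto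
      define y where "y = S x + s *\<^sub>R x"
      have "S y - s *\<^sub>R y = S (S x) - s^2 *\<^sub>R x"
        by (simp add: y_def S.add S.scale algebra_simps power2_eq_square)
      then have "c * norm y < c * e" using cb[of y] x by simp
      then have "norm (S x - (-s) *\<^sub>R x) < e" using c(1) by (simp add: y_def)
      then show "\<exists>y. norm y = 1 \<and> norm (S y - (-s) *\<^sub>R y) < e" using x by blast
    qed
  qed
qed



lemma clinear_on_shift:
  assumes "clinear_on D (T::'a::chilbert \<Rightarrow> 'a)"
  shows "clinear_on D (\<lambda>x. T x - z *\<^sub>C x)"
  using assms unfolding clinear_on_def
  by (auto simp: scaleC_add_right scaleC_diff_right scaleC_comm[of z])

lemma clinear_on_sum:
  assumes "clinear_on D (A::'a::chilbert \<Rightarrow> 'a)" "clinear_on UNIV B"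
  shows "clinear_on D (\<lambda>x. A x + c *\<^sub>C B x)"
  using assms unfolding clinear_on_def
  by (auto simp: scaleC_add_right scaleC_comm[of c])

lemma inv_clinear:
  assumes lin: "clinear_on D (P::'a::chilbert \<Rightarrow> 'a)" and bij: "bij_betw P D UNIV"
  shows "clinear_on UNIV (inv_into D P)"
proof -
  have inj: "inj_on P D" using bij by (simp add: bij_betw_def)
  have GD: "inv_into D P y \<in> D" for y using bij by (metis bij_betw_def inv_into_into UNIV_I)
  have PG: "P (inv_into D P y) = y" for y using bij by (metis bij_betw_def f_inv_into_f UNIV_I)
  have add: "inv_into D P (x + y) = inv_into D P x + inv_into D P y" for x y
  proof -
    have "inv_into D P x + inv_into D P y \<in> D" using lin GD unfolding clinear_on_def by blast
    moreover have "P (inv_into D P x + inv_into D P y) = x + y"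
      using lin GD PG unfolding clinear_on_def by simp
    ultimately show ?thesis using inj by (metis inv_into_f_f)
  qed
  have sc: "inv_into D P (c *\<^sub>C x) = c *\<^sub>C inv_into D P x" for c x
  proof -
    have "c *\<^sub>C inv_into D P x \<in> D" using lin GD unfolding clinear_on_def by blast
    moreover have "P (c *\<^sub>C inv_into D P x) = c *\<^sub>C x"
      using lin GD PG unfolding clinear_on_def by simp
    ultimately show ?thesis using inj by (metis inv_into_f_f)
  qed
  show ?thesis unfolding clinear_on_def using add sc by simp
qed

lemma spec_point:
  fixes D :: "'a::chilbert set" and T S :: "'a \<Rightarrow> 'a"
  assumes SD: "\<And>y. S y \<in> D" and TS: "\<And>y. T (S y) = y" and l: "l \<noteq> 0"
    and ae: "\<forall>e>0. \<exists>y. norm y = 1 \<and> norm (S y - l *\<^sub>R y) < e"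
  shows "complex_of_real (1/l) \<in> spectrum_op D T"
proof -
  define P where "P = (\<lambda>x. T x - complex_of_real (1/l) *\<^sub>C x)"
  show ?thesis
  proof (unfold spectrum_op_def resolvent_set_def, rule ComplI, clarify)
    assume bij: "bij_betw (\<lambda>x. T x - complex_of_real (1 / l) *\<^sub>C x) D UNIV"
      and bd: "bounded_clinear_op (inv_into D (\<lambda>x. T x - complex_of_real (1 / l) *\<^sub>C x))"
    have bij': "bij_betw P D UNIV" using bij by (simp add: P_def)
    have inj: "inj_on P D" using bij' by (simp add: bij_betw_def)
    obtain K where K: "\<And>x. norm (inv_into D P x) \<le> norm x * K"
      using bd unfolding bounded_clinear_op_def P_def by blast
    define m where "m = 1 / l"
    define e where "e = \<bar>l\<bar> / (1 + \<bar>K\<bar> * \<bar>m\<bar>)"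
    have den: "0 < 1 + \<bar>K\<bar> * \<bar>m\<bar>" by (simp add: add_pos_nonneg)
    have e0: "0 < e" using l den by (simp add: e_def)
    obtain y where y: "norm y = 1" "norm (S y - l *\<^sub>R y) < e" using ae e0 by blast
    have Px: "P (S y) = (- m) *\<^sub>R (S y - l *\<^sub>R y)"
    proof -
      have "m * l = 1" using l by (simp add: m_def)
      then have "(- m) *\<^sub>R (S y - l *\<^sub>R y) = y - m *\<^sub>R S y"
        by (simp add: algebra_simps)
      then show ?thesis by (simp add: P_def TS scaleR_as_C m_def)
    qed
    have "inv_into D P (P (S y)) = S y" using inj SD by (simp add: inv_into_f_f)
    then have "norm (S y) \<le> norm (P (S y)) * K" using K by metis
    also have "\<dots> \<le> norm (P (S y)) * \<bar>K\<bar>" by (simp add: mult_left_mono)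
    also have "norm (P (S y)) = \<bar>m\<bar> * norm (S y - l *\<^sub>R y)" by (simp add: Px)
    finally have A: "norm (S y) \<le> \<bar>m\<bar> * norm (S y - l *\<^sub>R y) * \<bar>K\<bar>" .
    have "\<bar>m\<bar> * norm (S y - l *\<^sub>R y) * \<bar>K\<bar> \<le> \<bar>m\<bar> * e * \<bar>K\<bar>"
      using y(2) by (intro mult_right_mono mult_left_mono) auto
    with A have A2: "norm (S y) \<le> \<bar>m\<bar> * e * \<bar>K\<bar>" by linarith
    have "\<bar>l\<bar> = norm (l *\<^sub>R y)" using y by simp
    also have "\<dots> \<le> norm (S y) + norm (S y - l *\<^sub>R y)" by (metis norm_triangle_sub add.commute norm_minus_commute)
    finally have "\<bar>l\<bar> < \<bar>m\<bar> * e * \<bar>K\<bar> + e" using A2 y(2) by linarith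
    also have "\<bar>m\<bar> * e * \<bar>K\<bar> + e = e * (1 + \<bar>K\<bar> * \<bar>m\<bar>)" by (simp add: algebra_simps)
    also have "\<dots> = \<bar>l\<bar>" using den by (simp add: e_def)
    finally show False by simp
  qed
qed

lemma resolvent_pt:
  fixes D :: "'a::chilbert set" and T S :: "'a \<Rightarrow> 'a"
  assumes lin: "clinear_on D T" and bl: "bounded_linear S"
    and SD: "\<And>y. S y \<in> D" and TS: "\<And>y. T (S y) = y" and ST: "\<And>x. x \<in> D \<Longrightarrow> S (T x) = x"
    and z: "cmod z * onorm S < 1"
  shows "z \<in> resolvent_set D T"
proof -
  interpret S: bounded_linear S by (rule bl)
  define s where "s = onorm S"
  have s0: "0 \<le> s" unfolding s_def by (rule onorm_pos_le[OF bl])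
  have Sb: "\<And>x. norm (S x) \<le> s * norm x" unfolding s_def by (rule onorm[OF bl])
  define c where "c = cmod z * s"
  have c: "0 \<le> c" "c < 1" using z s0 by (auto simp: c_def s_def)
  define N where "N = (\<lambda>w. w - z *\<^sub>C S w)"
  have zS: "norm (z *\<^sub>C S w) \<le> c * norm w" for w
    using Sb[of w] by (simp add: norm_scaleC c_def mult.assoc mult_left_mono)
  have Nb: "(1 - c) * norm w \<le> norm (N w)" for w
  proof -
    have "norm w \<le> norm (N w) + norm (z *\<^sub>C S w)"
      by (metis N_def diff_add_cancel norm_triangle_ineq)
    then show ?thesis using zS[of w] by (simp add: algebra_simps)
  qed
  have Ndiff: "N u - N v = N (u - v)" for u v
    by (simp add: N_def S.diff scaleC_diff_right)
  have Nsurj: "\<exists>w. N w = y" for y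
  proof -
    have "\<exists>!w. y + z *\<^sub>C S w = w"
    proof (rule banach_fix_type[OF c])
      show "\<forall>u v. dist (y + z *\<^sub>C S u) (y + z *\<^sub>C S v) \<le> c * dist u v"
      proof (intro allI)
        fix u v
        have "dist (y + z *\<^sub>C S u) (y + z *\<^sub>C S v) = norm (z *\<^sub>C S (u - v))"
          by (simp add: dist_norm S.diff scaleC_diff_right)
        also have "\<dots> \<le> c * dist u v" using zS[of "u - v"] by (simp add: dist_norm)
        finally show "dist (y + z *\<^sub>C S u) (y + z *\<^sub>C S v) \<le> c * dist u v" .
      qed
    qed
    then obtain w where "y + z *\<^sub>C S w = w" by blast
    then have "N w = y" unfolding N_def by (metis add_diff_cancel_right')
    then show ?thesis by blast
  qed
  define P where "P = (\<lambda>x. T x - z *\<^sub>C x)"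
  have PN: "x \<in> D \<Longrightarrow> P x = N (T x)" for x by (simp add: P_def N_def ST)
  have inj: "inj_on P D"
  proof (rule inj_onI)
    fix x1 x2 assume x: "x1 \<in> D" "x2 \<in> D" "P x1 = P x2"
    then have "N (T x1 - T x2) = 0" by (metis PN Ndiff diff_self)
    then have "(1 - c) * norm (T x1 - T x2) \<le> 0" using Nb by (metis norm_zero)
    then have "T x1 = T x2" using c by (simp add: mult_le_0_iff)
    then show "x1 = x2" using ST x by metis
  qed
  have surj: "P ` D = UNIV"
  proof -
    have "y \<in> P ` D" for y
    proof -
      obtain w where "N w = y" using Nsurj by blast
      then have "P (S w) = y" by (simp add: P_def N_def TS)
      then show ?thesis using SD by (metis image_eqI)
    qed
    then show ?thesis by blast
  qed
  have bij: "bij_betw P D UNIV" using inj surj by (simp add: bij_betw_def)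
  have linP: "clinear_on D P" unfolding P_def by (rule clinear_on_shift[OF lin])
  have bound: "norm (inv_into D P y) \<le> norm y * (s / (1 - c))" for y
  proof -
    have GD: "inv_into D P y \<in> D" using bij by (metis bij_betw_def inv_into_into UNIV_I)
    have PG: "P (inv_into D P y) = y" using bij by (metis bij_betw_def f_inv_into_f UNIV_I)
    define v where "v = T (inv_into D P y)"
    have "N v = y" using PG PN[OF GD] by (simp add: v_def)
    then have nv: "(1 - c) * norm v \<le> norm y" using Nb by metis
    have "norm (inv_into D P y) = norm (S v)" using ST[OF GD] by (simp add: v_def)
    also have "\<dots> \<le> s * norm v" by (rule Sb)
    also have "\<dots> \<le> s * (norm y / (1 - c))" using nv c s0
      by (intro mult_left_mono) (auto simp: pos_le_divide_eq mult.commute)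
    finally show ?thesis by (simp add: mult.commute)
  qed
  have "bounded_clinear_op (inv_into D P)"
    unfolding bounded_clinear_op_def using inv_clinear[OF linP bij] bound by blast
  then show ?thesis using bij unfolding resolvent_set_def P_def by blast
qed



lemma clin_comb:
  assumes "clinear_on UNIV (f::'a::chilbert \<Rightarrow> 'a)"
  shows "f (u + c *\<^sub>C v) = f u + c *\<^sub>C f v" "f (u - c *\<^sub>C v) = f u - c *\<^sub>C f v" "f 0 = 0"
proof -
  show 1: "f (u + c *\<^sub>C v) = f u + c *\<^sub>C f v" using assms unfolding clinear_on_def by simp
  have h1: "u - c *\<^sub>C v = u + (- c) *\<^sub>C v" using scaleC_diff_left[of 0 c v] by simp
  have h2: "(- c) *\<^sub>C f v = - (c *\<^sub>C f v)" using scaleC_diff_left[of 0 c "f v"] by simp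
  have h3: "f (u + (- c) *\<^sub>C v) = f u + (- c) *\<^sub>C f v" using assms unfolding clinear_on_def by simp
  show "f (u - c *\<^sub>C v) = f u - c *\<^sub>C f v" using h1 h2 h3 by (metis diff_conv_add_uminus)
  have "f ((0::complex) *\<^sub>C 0) = (0::complex) *\<^sub>C f 0" using assms unfolding clinear_on_def by blast
  then show "f 0 = 0" by simp
qed

lemma clin_comb_D:
  assumes "clinear_on D (f::'a::chilbert \<Rightarrow> 'a)" "u \<in> D" "v \<in> D"
  shows "f (u + c *\<^sub>C v) = f u + c *\<^sub>C f v" "f (u - c *\<^sub>C v) = f u - c *\<^sub>C f v" "f 0 = 0"
proof -
  show 1: "f (u + c *\<^sub>C v) = f u + c *\<^sub>C f v" using assms unfolding clinear_on_def by simp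
  have h1: "u - c *\<^sub>C v = u + (- c) *\<^sub>C v" using scaleC_diff_left[of 0 c v] by simp
  have h2: "(- c) *\<^sub>C f v = - (c *\<^sub>C f v)" using scaleC_diff_left[of 0 c "f v"] by simp
  have h3: "f (u + (- c) *\<^sub>C v) = f u + (- c) *\<^sub>C f v" using assms unfolding clinear_on_def by simp
  show "f (u - c *\<^sub>C v) = f u - c *\<^sub>C f v" using h1 h2 h3 by (metis diff_conv_add_uminus)
  have "f ((0::complex) *\<^sub>C 0) = (0::complex) *\<^sub>C f 0" using assms unfolding clinear_on_def by blast
  then show "f 0 = 0" by simp
qed

lemma infdist_ge:
  assumes "A \<noteq> {}" "\<And>a. a \<in> A \<Longrightarrow> d \<le> dist x a"
  shows "d \<le> infdist x A"
  using assms by (simp add: infdist_notempty cINF_greatest)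

theorem corollary2p3:
  fixes D :: "'a::chilbert set" and A B :: "'a \<Rightarrow> 'a"
  assumes A_sa: "self_adjoint_op D A"
    and B_bdd: "bounded_clinear_op B"
    and B_sa: "self_adjoint_op UNIV B"
    and B_nonneg: "\<forall>x. 0 \<le> Re (cinner x (B x))"
    and B_nz: "B \<noteq> (\<lambda>x. 0)"
    and A_inv: "0 \<in> resolvent_set D A"
    and BAB: "B \<circ> inv_into D A \<circ> B = (\<lambda>x. 0)"
  shows "inv_into D A \<circ> B \<circ> inv_into D A \<noteq> (\<lambda>x. 0) \<and>
    (\<forall>t::real. \<bar>t\<bar> > onorm (inv_into D A) / onorm (inv_into D A \<circ> B \<circ> inv_into D A) \<longrightarrow>
      1 / (\<bar>t\<bar> * onorm (inv_into D A \<circ> B \<circ> inv_into D A) + onorm (inv_into D A))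
        \<le> infdist 0 (spectrum_op D (\<lambda>x. A x + complex_of_real t *\<^sub>C B x)) \<and>
      infdist 0 (spectrum_op D (\<lambda>x. A x + complex_of_real t *\<^sub>C B x))
        \<le> 1 / (\<bar>t\<bar> * onorm (inv_into D A \<circ> B \<circ> inv_into D A) - onorm (inv_into D A)))"
proof -
  define R where "R = inv_into D A"
  define C where "C = inv_into D A \<circ> B \<circ> inv_into D A"
  have Cy: "C y = R (B (R y))" for y by (simp add: C_def R_def)
  have linA: "clinear_on D A" using A_sa by (simp add: self_adjoint_op_def)
  have dense: "closure D = UNIV" using A_sa by (simp add: self_adjoint_op_def)
  have eqA: "(\<lambda>x. A x - 0 *\<^sub>C x) = A" by simp
  have bijA: "bij_betw A D UNIV" and bdR: "bounded_clinear_op R"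
    using A_inv unfolding resolvent_set_def R_def eqA by auto
  have RD: "R y \<in> D" for y using bijA unfolding R_def by (metis bij_betw_def inv_into_into UNIV_I)
  have AR: "A (R y) = y" for y using bijA unfolding R_def by (metis bij_betw_def f_inv_into_f UNIV_I)
  have RA: "x \<in> D \<Longrightarrow> R (A x) = x" for x using bijA unfolding R_def by (metis bij_betw_def inv_into_f_f)
  have blR: "bounded_linear R" by (rule bounded_clinear_op_bl[OF bdR])
  have blB: "bounded_linear B" by (rule bounded_clinear_op_bl[OF B_bdd])
  have linR: "clinear_on UNIV R" using bdR by (simp add: bounded_clinear_op_def)
  have linB: "clinear_on UNIV B" using B_bdd by (simp add: bounded_clinear_op_def)
  have symA: "cinner (A x) y = cinner x (A y)" if "x \<in> D" "y \<in> D" for x y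
    using A_sa that unfolding self_adjoint_op_def by blast
  have symB: "cinner (B x) y = cinner x (B y)" for x y
    using B_sa unfolding self_adjoint_op_def by blast
  have symR: "cinner (R x) y = cinner x (R y)" for x y
  proof -
    have "cinner (R x) y = cinner (R x) (A (R y))" by (simp add: AR)
    also have "\<dots> = cinner (A (R x)) (R y)" using symA[OF RD RD] by simp
    finally show ?thesis by (simp add: AR)
  qed
  have symC: "cinner (C x) y = cinner x (C y)" for x y by (simp add: Cy symR symB)
  have BRB: "B (R (B x)) = 0" for x using fun_cong[OF BAB, of x] by (simp add: R_def)
  have blC: "bounded_linear C" unfolding C_def R_def[symmetric] comp_def
    by (intro bounded_linear_compose[OF blR] bounded_linear_compose[OF blB] blR)
  have Cnz: "C \<noteq> (\<lambda>x. 0)"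
  proof
    assume C0: "C = (\<lambda>x. 0)"
    have "B (R x) = 0" for x
    proof -
      have "B (R x) = A (R (B (R x)))" by (simp add: AR)
      also have "\<dots> = A 0" using fun_cong[OF C0, of x] by (simp add: Cy)
      also have "\<dots> = 0" using clin_comb_D(3)[OF linA] RD by blast
      finally show ?thesis .
    qed
    then have "D \<subseteq> {x. B x = (\<lambda>x. 0) x}" using RA by (metis (mono_tags, lifting) mem_Collect_eq subsetI)
    moreover have "closed {x. B x = (\<lambda>x. 0) x}"
      by (intro closed_Collect_eq linear_continuous_on[OF blB] continuous_on_const)
    ultimately have "closure D \<subseteq> {x. B x = 0}" by (simp add: closure_minimal)
    then have "B = (\<lambda>x. 0)" using dense by auto
    then show False using B_nz by simp
  qed
  have cpos: "0 < onorm C" using Cnz onorm_pos_lt[OF blC] by auto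
  show ?thesis
  proof (intro conjI allI impI)
    show "inv_into D A \<circ> B \<circ> inv_into D A \<noteq> (\<lambda>x. 0)" using Cnz by (simp add: C_def)
    fix t :: real
    assume "onorm (inv_into D A) / onorm (inv_into D A \<circ> B \<circ> inv_into D A) < \<bar>t\<bar>"
    then have tc: "onorm R < \<bar>t\<bar> * onorm C" using cpos by (simp add: R_def C_def pos_divide_less_eq)
    define T where "T = (\<lambda>x. A x + complex_of_real t *\<^sub>C B x)"
    define S where "S = (\<lambda>y. R y - t *\<^sub>R C y)"
    have linT: "clinear_on D T" unfolding T_def by (rule clinear_on_sum[OF linA linB])
    have Seq: "S y = R (y - complex_of_real t *\<^sub>C B (R y))" for y
      by (simp add: S_def clin_comb(2)[OF linR] Cy scaleR_as_C)
    have SD: "S y \<in> D" for y by (simp add: Seq RD)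
    have TS: "T (S y) = y" for y
    proof -
      define w where "w = y - complex_of_real t *\<^sub>C B (R y)"
      have "B (R w) = B (R y)"
        by (simp add: w_def clin_comb(2)[OF linR] clin_comb(2)[OF linB] BRB)
      then show ?thesis by (simp add: T_def Seq w_def[symmetric] AR) (simp add: w_def)
    qed
    have ST: "S (T x) = x" if x: "x \<in> D" for x
    proof -
      have "R (T x) = x + complex_of_real t *\<^sub>C R (B x)"
        by (simp add: T_def clin_comb(1)[OF linR] RA[OF x])
      moreover have "C (T x) = R (B x)"
        by (simp add: Cy T_def clin_comb(1)[OF linR] clin_comb(1)[OF linB] RA[OF x] BRB)
      ultimately show ?thesis by (simp add: S_def scaleR_as_C)
    qed
    have symS: "cinner (S x) y = cinner x (S y)" for x y
      by (simp add: S_def cinner_diff_left cinner_diff_right scaleR_as_C cinner_scaleC_left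
          cinner_scaleC_right symR symC)
    have blS: "bounded_linear S" unfolding S_def
      by (intro bounded_linear_sub blR bounded_linear_compose[OF bounded_linear_scaleR_right blC])
    define s where "s = onorm S"
    have s_up: "s \<le> \<bar>t\<bar> * onorm C + onorm R"
      unfolding s_def
    proof (rule onorm_bound)
      show "0 \<le> \<bar>t\<bar> * onorm C + onorm R" using onorm_pos_le[OF blC] onorm_pos_le[OF blR] by simp
      fix x
      have "norm (S x) \<le> norm (R x) + \<bar>t\<bar> * norm (C x)" unfolding S_def
        by (metis norm_scaleR norm_triangle_ineq4)
      also have "\<dots> \<le> onorm R * norm x + \<bar>t\<bar> * (onorm C * norm x)"
        by (intro add_mono mult_left_mono onorm[OF blR] onorm[OF blC]) auto
      finally show "norm (S x) \<le> (\<bar>t\<bar> * onorm C + onorm R) * norm x" by (simp add: algebra_simps)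
    qed
    have s_low: "\<bar>t\<bar> * onorm C \<le> onorm R + s"
    proof -
      have "onorm (\<lambda>y. t *\<^sub>R C y) \<le> onorm R + s" unfolding s_def
      proof (rule onorm_bound)
        show "0 \<le> onorm R + onorm S" using onorm_pos_le[OF blS] onorm_pos_le[OF blR] by simp
        fix x
        have "t *\<^sub>R C x = R x - S x" by (simp add: S_def)
        then have "norm (t *\<^sub>R C x) \<le> norm (R x) + norm (S x)" by (metis norm_triangle_ineq4)
        also have "\<dots> \<le> onorm R * norm x + onorm S * norm x"
          by (intro add_mono onorm[OF blR] onorm[OF blS])
        finally show "norm (t *\<^sub>R C x) \<le> (onorm R + onorm S) * norm x" by (simp add: algebra_simps)
      qed
      then show ?thesis using onorm_scaleR[OF blC, of t] by simp
    qed
    have s0: "0 < s" using s_low tc by linarith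
    obtain l where l: "\<bar>l\<bar> = s" "\<forall>e>0. \<exists>y. norm y = 1 \<and> norm (S y - l *\<^sub>R y) < e"
      using approx_eig[OF blS symS] s0 s_def by blast
    have l0: "l \<noteq> 0" using l s0 by auto
    have mu: "complex_of_real (1/l) \<in> spectrum_op D T" by (rule spec_point[OF SD TS l0 l(2)])
    have ne: "spectrum_op D T \<noteq> {}" using mu by blast
    have up: "infdist 0 (spectrum_op D T) \<le> 1 / s"
      using infdist_le[OF mu, of 0] l by (simp add: dist_norm norm_divide)
    have low: "1 / s \<le> infdist 0 (spectrum_op D T)"
    proof (rule infdist_ge[OF ne])
      fix z assume z: "z \<in> spectrum_op D T"
      show "1 / s \<le> dist 0 z"
      proof (rule ccontr)
        assume "\<not> ?thesis"
        then have "cmod z < 1 / s" by (simp add: dist_norm)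
        then have "cmod z * onorm S < 1" using s0 s_def by (simp add: pos_less_divide_eq)
        then have "z \<in> resolvent_set D T" using resolvent_pt[OF linT blS SD TS ST] by blast
        then show False using z by (simp add: spectrum_op_def)
      qed
    qed
    have "1 / (\<bar>t\<bar> * onorm C + onorm R) \<le> 1 / s" using s0 s_up by (intro divide_left_mono) auto
    moreover have "1 / s \<le> 1 / (\<bar>t\<bar> * onorm C - onorm R)" using s0 s_low tc
      by (intro divide_left_mono) auto
    ultimately show "1 / (\<bar>t\<bar> * onorm (inv_into D A \<circ> B \<circ> inv_into D A) + onorm (inv_into D A))
        \<le> infdist 0 (spectrum_op D (\<lambda>x. A x + complex_of_real t *\<^sub>C B x))"
      "infdist 0 (spectrum_op D (\<lambda>x. A x + complex_of_real t *\<^sub>C B x))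
        \<le> 1 / (\<bar>t\<bar> * onorm (inv_into D A \<circ> B \<circ> inv_into D A) - onorm (inv_into D A))"
      using up low by (simp_all add: C_def R_def T_def)
  qed
qed


end
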